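(* A linear $[n,k]$ MDS code $\mathcal C$ over $F$ is $2$-MDS if and only if, for every integer $w$ with $\max\{0,n-2k\}\le w\le n-k-3$ and every set $X\subseteq\{1,\dots,n\}$ of size $w$, the linear $[n-w,k]$ code obtained by puncturing $\mathcal C$ on $X$ is lightly-$2$-MDS.
   Context: $F=\mathrm{GF}(q)$; $\mathsf w(\cdot)$ is Hamming weight. A linear $[n,k]$ code is $2$-MDS if there do not exist three distinct vectors $e_0,e_1,e_2\in F^n$ in the same coset of the code with $\mathsf w(e_0)+\mathsf w(e_1)+\mathsf w(e_2)\le 2(n-k)$. The puncturing of $\mathcal C$ on $X$ is $\{(c_j)_{j\notin X}: c\in\mathcal C\}$. A linear $[n',k',d']$ code $\mathcal C'$ is lightly-$2$-MDS if there do not exist three nonzero vectors $e_0,e_1,e_2\in F^{n'}$, each of Hamming weight at most $d'-1$, in the same coset of $\mathcal C'$, with pairwise disjoint supports and $\mathsf w(e_0)+\mathsf w(e_1)+\mathsf w(e_2)\le 2(n'-k')$. *)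

theory Defs
  imports Main "HOL.Vector_Spaces" "HOL-Library.Function_Algebras"
begin

text \<open>Vectors over a finite field F are functions nat => F, supported on a finite
  index set I (the coordinate positions). F^n corresponds to I = {0..<n}.\<close>

definition scl :: "'a::field \<Rightarrow> (nat \<Rightarrow> 'a) \<Rightarrow> (nat \<Rightarrow> 'a)" where
  "scl c v = (\<lambda>i. c * v i)"

definition vecs :: "nat set \<Rightarrow> (nat \<Rightarrow> 'a::zero) set" where
  "vecs I = {v. \<forall>i. i \<notin> I \<longrightarrow> v i = 0}"

definition supp :: "(nat \<Rightarrow> 'a::zero) \<Rightarrow> nat set" where
  "supp v = {i. v i \<noteq> 0}"

definition wt :: "(nat \<Rightarrow> 'a::zero) \<Rightarrow> nat" where
  "wt v = card (supp v)"

definition lin_code :: "nat set \<Rightarrow> (nat \<Rightarrow> 'a::field) set \<Rightarrow> bool" where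
  "lin_code I C \<longleftrightarrow> finite I \<and> C \<subseteq> vecs I \<and> module.subspace scl C"

definition code_dim :: "(nat \<Rightarrow> 'a::field) set \<Rightarrow> nat" where
  "code_dim C = vector_space.dim scl C"

text \<open>minimum distance; convention: the zero code has minimum distance |I|+1\<close>
definition min_dist :: "nat set \<Rightarrow> (nat \<Rightarrow> 'a::field) set \<Rightarrow> nat" where
  "min_dist I C = (if C \<subseteq> {0} then card I + 1 else Min {wt c | c. c \<in> C \<and> c \<noteq> 0})"

definition is_MDS :: "nat set \<Rightarrow> (nat \<Rightarrow> 'a::field) set \<Rightarrow> bool" where
  "is_MDS I C \<longleftrightarrow> lin_code I C \<and> min_dist I C = card I - code_dim C + 1"

definition two_MDS :: "nat set \<Rightarrow> (nat \<Rightarrow> 'a::field) set \<Rightarrow> bool" where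
  "two_MDS I C \<longleftrightarrow> \<not> (\<exists>e0 e1 e2. e0 \<in> vecs I \<and> e1 \<in> vecs I \<and> e2 \<in> vecs I \<and>
       e0 \<noteq> e1 \<and> e0 \<noteq> e2 \<and> e1 \<noteq> e2 \<and>
       e0 - e1 \<in> C \<and> e0 - e2 \<in> C \<and> e1 - e2 \<in> C \<and>
       wt e0 + wt e1 + wt e2 \<le> 2 * (card I - code_dim C))"

definition lightly_two_MDS :: "nat set \<Rightarrow> (nat \<Rightarrow> 'a::field) set \<Rightarrow> bool" where
  "lightly_two_MDS I C \<longleftrightarrow> \<not> (\<exists>e0 e1 e2. e0 \<in> vecs I \<and> e1 \<in> vecs I \<and> e2 \<in> vecs I \<and>
       e0 \<noteq> 0 \<and> e1 \<noteq> 0 \<and> e2 \<noteq> 0 \<and>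
       wt e0 + 1 \<le> min_dist I C \<and> wt e1 + 1 \<le> min_dist I C \<and> wt e2 + 1 \<le> min_dist I C \<and>
       e0 - e1 \<in> C \<and> e0 - e2 \<in> C \<and> e1 - e2 \<in> C \<and>
       supp e0 \<inter> supp e1 = {} \<and> supp e0 \<inter> supp e2 = {} \<and> supp e1 \<inter> supp e2 = {} \<and>
       wt e0 + wt e1 + wt e2 \<le> 2 * (card I - code_dim C))"

definition puncture :: "nat set \<Rightarrow> nat set \<Rightarrow> (nat \<Rightarrow> 'a::zero) set \<Rightarrow> (nat \<Rightarrow> 'a) set" where
  "puncture I X C = (\<lambda>c i. if i \<in> I - X then c i else 0) ` C"

end

theory Submission
  imports Defs
begin

lemma scl_vs: "vector_space (scl :: 'a::field \<Rightarrow> (nat \<Rightarrow> 'a) \<Rightarrow> _)"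
  by unfold_locales (auto simp: scl_def fun_eq_iff algebra_simps)

interpretation VS: vector_space "scl :: 'a::field \<Rightarrow> (nat \<Rightarrow> 'a) \<Rightarrow> _"
  by (rule scl_vs)

definition pm :: "nat set \<Rightarrow> nat set \<Rightarrow> (nat \<Rightarrow> 'a::zero) \<Rightarrow> (nat \<Rightarrow> 'a)" where
  "pm I X c = (\<lambda>i. if i \<in> I - X then c i else 0)"

lemma puncture_pm: "puncture I X C = pm I X ` C"
  unfolding puncture_def pm_def by simp

lemma pm_diff: "pm I X (x - y) = pm I X x - pm I X (y :: nat \<Rightarrow> 'a::ab_group_add)"
  by (auto simp: pm_def fun_eq_iff)

lemma pm_hom: "module_hom scl scl (pm I X :: (nat \<Rightarrow> 'a::field) \<Rightarrow> _)"
  unfolding module_hom_iff_linear linear_iff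
  by (auto simp: scl_vs pm_def scl_def fun_eq_iff)

lemma wt_sum: assumes "v \<in> vecs J" "finite J"
  shows "wt v = (\<Sum>j\<in>J. of_bool (v j \<noteq> 0))"
proof -
  have "supp v = J \<inter> {j. v j \<noteq> 0}" using assms(1) by (auto simp: supp_def vecs_def)
  then show ?thesis using assms(2) by (simp add: wt_def sum_of_bool_eq)
qed

lemma supp_sub: "v \<in> vecs J \<Longrightarrow> supp v \<subseteq> J"
  by (auto simp: supp_def vecs_def)

lemma wt_le: "v \<in> vecs J \<Longrightarrow> finite J \<Longrightarrow> wt v \<le> card J"
  unfolding wt_def by (meson card_mono supp_sub)

lemma wt_zero_iff: "v \<in> vecs J \<Longrightarrow> finite J \<Longrightarrow> wt v = 0 \<longleftrightarrow> v = 0"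
  unfolding wt_def
  by (auto simp: supp_def fun_eq_iff dest!: supp_sub intro: finite_subset)
    (metis (mono_tags, lifting) Collect_empty_eq card_0_eq finite_subset supp_def supp_sub)

lemma vecs_diff: "x \<in> vecs J \<Longrightarrow> y \<in> vecs J \<Longrightarrow> x - (y :: nat \<Rightarrow> 'a::ab_group_add) \<in> vecs J"
  by (auto simp: vecs_def)

lemma wt_diff_le: assumes "x \<in> vecs J" "y \<in> vecs J" "finite J"
  shows "wt (x - (y :: nat \<Rightarrow> 'a::ab_group_add)) \<le> wt x + wt y"
proof -
  have "supp (x - y) \<subseteq> supp x \<union> supp y" by (auto simp: supp_def)
  moreover have "finite (supp x)" "finite (supp y)"
    using assms by (meson finite_subset supp_sub)+
  ultimately show ?thesis unfolding wt_def
    by (meson card_Un_le card_mono finite_UnI le_trans)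
qed

lemma pm_vecs: "pm I X c \<in> vecs (I - X)"
  by (auto simp: pm_def vecs_def)

lemma wt_pm: assumes "c \<in> vecs I" "finite X" "finite I"
  shows "wt c \<le> wt (pm I X c) + card X"
proof -
  have "supp c \<subseteq> supp (pm I X c) \<union> X" using assms(1)
    by (auto simp: supp_def pm_def vecs_def)
  moreover have "finite (supp (pm I X c))"
  proof -
    have "supp (pm I X c) \<subseteq> supp c \<inter> - X" by (auto simp: supp_def pm_def)
    moreover have "finite (supp c)" using assms by (meson finite_subset supp_sub)
    ultimately show ?thesis by (meson finite_Int finite_subset)
  qed
  ultimately show ?thesis unfolding wt_def
    by (meson assms(2) card_Un_le card_mono finite_UnI le_trans)
qed


lemma mds_wt: assumes "is_MDS {0..<n} C" "code_dim C = k" "c \<in> C" "c \<noteq> 0"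
  shows "n - k + 1 \<le> wt c"
proof -
  have lc: "lin_code {0..<n} C" and md: "min_dist {0..<n} C = n - k + 1"
    using assms by (auto simp: is_MDS_def)
  have nz: "\<not> C \<subseteq> {0}" using assms by auto
  let ?W = "{wt c |c. c \<in> C \<and> c \<noteq> 0}"
  have "?W \<subseteq> {..n}" using lc wt_le[of _ "{0..<n}"] by (fastforce simp: lin_code_def)
  then have "finite ?W" by (meson finite_atMost finite_subset)
  moreover have "wt c \<in> ?W" using assms by auto
  ultimately have "Min ?W \<le> wt c" by simp
  then show ?thesis using md nz by (simp add: min_dist_def)
qed

lemma wt0[simp]: "wt (0 :: nat \<Rightarrow> 'a::zero) = 0"
  by (simp add: wt_def supp_def)

lemma dim_pm: assumes lc: "lin_code I (C :: (nat \<Rightarrow> 'a::field) set)" and fX: "finite X"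
  and big: "\<forall>c\<in>C. c \<noteq> 0 \<longrightarrow> card X < wt c"
  shows "code_dim (pm I X ` C) = code_dim C"
proof -
  have sub: "VS.subspace C" using lc by (simp add: lin_code_def)
  have fI: "finite I" and CI: "C \<subseteq> vecs I" using lc by (auto simp: lin_code_def)
  have spC: "VS.span C = C" using sub by (simp add: VS.span_eq_iff)
  have inj: "inj_on (pm I X) C"
  proof (rule inj_onI)
    fix x y assume xy: "x \<in> C" "y \<in> C" "pm I X x = pm I X y"
    have d: "x - y \<in> C" using sub xy by (simp add: VS.subspace_diff)
    have "pm I X (x - y) = 0" using xy by (simp add: pm_diff)
    moreover have "wt (x - y) \<le> wt (pm I X (x - y)) + card X"
      using wt_pm[OF _ fX fI] d CI by blast
    ultimately show "x = y" using big d by fastforce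
  qed
  obtain B where B: "B \<subseteq> C" "VS.independent B" "C \<subseteq> VS.span B" "card B = VS.dim C"
    using VS.basis_exists by blast
  have spB: "VS.span B = C"
    using B spC VS.span_mono by (metis subset_antisym)
  have indep: "VS.independent (pm I X ` B)"
    using module_hom.dependent_inj_imageD[OF pm_hom, of I X B] inj spB B(2) by auto
  have cardB: "card (pm I X ` B) = card B"
    using card_image inj B(1) inj_on_subset by blast
  have "pm I X ` C \<subseteq> VS.span (pm I X ` B)"
    using module_hom.span_image[OF pm_hom, of I X B] spB by simp
  then have "card (pm I X ` B) = VS.dim (pm I X ` C)"
    using VS.basis_card_eq_dim[of "pm I X ` B" "pm I X ` C"] B(1) indep by blast
  then show ?thesis using B(4) cardB by (simp add: code_dim_def)
qed


lemma md_pm: assumes lc: "lin_code I (C :: (nat \<Rightarrow> 'a::field) set)" and fX: "finite X"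
  and big: "\<forall>c\<in>C. c \<noteq> 0 \<longrightarrow> m \<le> wt c"
  and t1: "t + 1 \<le> m - card X" and t2: "t \<le> card (I - X)"
  shows "t + 1 \<le> min_dist (I - X) (pm I X ` C)"
proof (cases "pm I X ` C \<subseteq> {0}")
  case True then show ?thesis using t2 by (simp add: min_dist_def)
next
  case False
  have fI: "finite I" and CI: "C \<subseteq> vecs I" using lc by (auto simp: lin_code_def)
  let ?W = "{wt c |c. c \<in> pm I X ` C \<and> c \<noteq> 0}"
  have "?W \<subseteq> {..card (I - X)}"
  proof
    fix x assume "x \<in> ?W"
    then obtain c :: "nat \<Rightarrow> 'a" where "x = wt (pm I X c)" by blast
    moreover have "wt (pm I X c) \<le> card (I - X)" using wt_le[OF pm_vecs] fI by blast
    ultimately show "x \<in> {..card (I - X)}" by simp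
  qed
  then have fW: "finite ?W" by (meson finite_atMost finite_subset)
  have ne: "?W \<noteq> {}" using False by auto
  have H: "\<forall>x\<in>?W. t + 1 \<le> x"
  proof
    fix x assume "x \<in> ?W"
    then obtain c where c: "c \<in> C" "pm I X c \<noteq> 0" "x = wt (pm I X c)" by auto
    have "c \<noteq> 0" using c by (auto simp: pm_def)
    then have "m \<le> wt c" using big c by auto
    moreover have "wt c \<le> x + card X" using wt_pm[OF _ fX fI] c CI by auto
    ultimately show "t + 1 \<le> x" using t1 by linarith
  qed
  have "t + 1 \<le> Min ?W" using Min_ge_iff[OF fW ne, of "t+1"] H by blast
  moreover have "min_dist (I - X) (pm I X ` C) = Min ?W" using False by (simp only: min_dist_def if_False)
  ultimately show ?thesis by simp
qed

lemma pm_id: "v \<in> vecs (I - X) \<Longrightarrow> pm I X v = v"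
  by (auto simp: pm_def vecs_def fun_eq_iff)

lemma percoord:
  fixes x y z :: "'a::zero"
  defines "cnt \<equiv> of_bool (x \<noteq> 0) + of_bool (y \<noteq> 0) + of_bool (z \<noteq> 0) :: nat"
  shows "of_bool (x \<noteq> y) + of_bool (x \<noteq> z) + of_bool (y \<noteq> z)
           \<le> 3 * of_bool (2 \<le> cnt) + 2 * (of_bool (cnt = 1) :: nat)"
    and "of_bool (x \<noteq> y) \<le> of_bool (2 \<le> cnt) + (of_bool (cnt = 1) :: nat)"
    and "2 * of_bool (2 \<le> cnt) + of_bool (cnt = 1) \<le> cnt"
  unfolding cnt_def
  by (cases "x = 0"; cases "y = 0"; cases "z = 0"; cases "x = y"; cases "x = z"; cases "y = z"; simp)+


lemma dir1:
  fixes C :: "(nat \<Rightarrow> 'a::field) set" and n k w :: nat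
  assumes lc: "lin_code {0..<n} C" and dk: "code_dim C = k"
    and mw: "\<forall>c\<in>C. c \<noteq> 0 \<longrightarrow> n - k + 1 \<le> wt c"
    and two: "two_MDS {0..<n} C"
    and wle: "w + k \<le> n" and XJ: "X \<subseteq> {0..<n}" and cX: "card X = w"
  shows "lightly_two_MDS ({0..<n} - X) (pm {0..<n} X ` C)"
proof (rule ccontr)
  let ?J = "{0..<n}" and ?p = "pm {0..<n} X"
  assume "\<not> lightly_two_MDS (?J - X) (?p ` C)"
  then have "\<exists>e0 e1 e2. e0 \<in> vecs (?J - X) \<and> e1 \<in> vecs (?J - X) \<and> e2 \<in> vecs (?J - X) \<and>
       e0 \<noteq> 0 \<and> e1 \<noteq> 0 \<and> e2 \<noteq> 0 \<and>
       wt e0 + 1 \<le> min_dist (?J - X) (?p ` C) \<and> wt e1 + 1 \<le> min_dist (?J - X) (?p ` C) \<and> wt e2 + 1 \<le> min_dist (?J - X) (?p ` C) \<and>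
       e0 - e1 \<in> ?p ` C \<and> e0 - e2 \<in> ?p ` C \<and> e1 - e2 \<in> ?p ` C \<and>
       supp e0 \<inter> supp e1 = {} \<and> supp e0 \<inter> supp e2 = {} \<and> supp e1 \<inter> supp e2 = {} \<and>
       wt e0 + wt e1 + wt e2 \<le> 2 * (card (?J - X) - code_dim (?p ` C))"
    unfolding lightly_two_MDS_def by (rule notnotD)
  then obtain f0 f1 f2 where f: "f0 \<in> vecs (?J - X)" "f1 \<in> vecs (?J - X)" "f2 \<in> vecs (?J - X)"
    "f0 \<noteq> 0" "f1 \<noteq> 0" "f2 \<noteq> 0"
    "f0 - f1 \<in> ?p ` C" "f0 - f2 \<in> ?p ` C"
    "supp f0 \<inter> supp f1 = {}" "supp f0 \<inter> supp f2 = {}" "supp f1 \<inter> supp f2 = {}"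
    "wt f0 + wt f1 + wt f2 \<le> 2 * (card (?J - X) - code_dim (?p ` C))"
    by (elim exE conjE) (rule that; assumption)
  have fX: "finite X" using XJ finite_subset by blast
  have sub: "VS.subspace C" and CJ: "C \<subseteq> vecs ?J" using lc by (auto simp: lin_code_def)
  have "code_dim (?p ` C) = k"
    using dim_pm[OF lc fX] mw cX wle dk by fastforce
  moreover have "card (?J - X) = n - w" using XJ cX fX by (simp add: card_Diff_subset)
  ultimately have ws: "wt f0 + wt f1 + wt f2 \<le> 2 * (n - w - k)" using f(12) by simp
  obtain c1 where c1: "c1 \<in> C" "?p c1 = f0 - f1" using f(7) by auto
  obtain c2 where c2: "c2 \<in> C" "?p c2 = f0 - f2" using f(8) by auto
  have vJ: "vecs (?J - X) \<subseteq> vecs ?J" by (auto simp: vecs_def)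
  define E1 where "E1 = f0 - c1"
  define E2 where "E2 = f0 - c2"
  have f0J: "f0 \<in> vecs ?J" using f(1) vJ by blast
  have E1v: "E1 \<in> vecs ?J" unfolding E1_def using f0J c1 CJ vecs_diff by blast
  have E2v: "E2 \<in> vecs ?J" unfolding E2_def using f0J c2 CJ vecs_diff by blast
  have pE1: "?p E1 = f1" unfolding E1_def by (simp add: pm_diff pm_id[OF f(1)] c1)
  have pE2: "?p E2 = f2" unfolding E2_def by (simp add: pm_diff pm_id[OF f(1)] c2)
  have d01: "f0 \<noteq> f1"
  proof
    assume "f0 = f1"
    then have "supp f0 = {}" using f(9) by simp
    then show False using f(4) by (auto simp: supp_def fun_eq_iff)
  qed
  have d02: "f0 \<noteq> f2"
  proof
    assume "f0 = f2"
    then have "supp f0 = {}" using f(10) by simp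
    then show False using f(4) by (auto simp: supp_def fun_eq_iff)
  qed
  have d12: "f1 \<noteq> f2"
  proof
    assume "f1 = f2"
    then have "supp f1 = {}" using f(11) by simp
    then show False using f(5) by (auto simp: supp_def fun_eq_iff)
  qed
  have "wt E1 \<le> wt f1 + w" using wt_pm[OF E1v fX finite_atLeastLessThan] pE1 cX by auto
  moreover have "wt E2 \<le> wt f2 + w" using wt_pm[OF E2v fX finite_atLeastLessThan] pE2 cX by auto
  ultimately have "wt f0 + wt E1 + wt E2 \<le> 2 * (n - k)" using ws wle by linarith
  moreover have "f0 \<noteq> E1" using pE1 pm_id[OF f(1)] d01 by metis
  moreover have "f0 \<noteq> E2" using pE2 pm_id[OF f(1)] d02 by metis
  moreover have "E1 \<noteq> E2" using pE1 pE2 d12 by metis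
  moreover have "f0 - E1 \<in> C" "f0 - E2 \<in> C" using c1 c2 by (simp_all add: E1_def E2_def)
  moreover have "E1 - E2 \<in> C" using c1 c2 sub
    by (simp add: E1_def E2_def VS.subspace_diff)
  ultimately have "\<exists>e0 e1 e2. e0 \<in> vecs ?J \<and> e1 \<in> vecs ?J \<and> e2 \<in> vecs ?J \<and>
       e0 \<noteq> e1 \<and> e0 \<noteq> e2 \<and> e1 \<noteq> e2 \<and>
       e0 - e1 \<in> C \<and> e0 - e2 \<in> C \<and> e1 - e2 \<in> C \<and>
       wt e0 + wt e1 + wt e2 \<le> 2 * (card ?J - code_dim C)"
    using f0J E1v E2v dk by (intro exI[of _ f0] exI[of _ E1] exI[of _ E2]) simp
  then show False using two unfolding two_MDS_def by blast
qed


lemma dir2: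
  fixes C :: "(nat \<Rightarrow> 'a::field) set" and n k :: nat
  assumes lc: "lin_code {0..<n} C" and dk: "code_dim C = k"
    and mw: "\<forall>c\<in>C. c \<noteq> 0 \<longrightarrow> n - k + 1 \<le> wt c"
    and R: "\<forall>w::nat. \<forall>X. max 0 (int n - 2 * int k) \<le> int w \<longrightarrow> int w \<le> int n - int k - 3 \<longrightarrow>
        X \<subseteq> {0..<n} \<longrightarrow> card X = w \<longrightarrow>
        lightly_two_MDS ({0..<n} - X) (pm {0..<n} X ` C)"
  shows "two_MDS {0..<n} C"
proof (rule ccontr)
  let ?J = "{0..<n}"
  assume "\<not> two_MDS ?J C"
  then have "\<exists>e0 e1 e2. e0 \<in> vecs ?J \<and> e1 \<in> vecs ?J \<and> e2 \<in> vecs ?J \<and>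
       e0 \<noteq> e1 \<and> e0 \<noteq> e2 \<and> e1 \<noteq> e2 \<and>
       e0 - e1 \<in> C \<and> e0 - e2 \<in> C \<and> e1 - e2 \<in> C \<and>
       wt e0 + wt e1 + wt e2 \<le> 2 * (card ?J - code_dim C)"
    unfolding two_MDS_def by (rule notnotD)
  then obtain e0 e1 e2 where e: "e0 \<in> vecs ?J" "e1 \<in> vecs ?J" "e2 \<in> vecs ?J"
       "e0 \<noteq> e1" "e0 \<noteq> e2" "e1 \<noteq> e2"
       "e0 - e1 \<in> C" "e0 - e2 \<in> C" "e1 - e2 \<in> C"
       "wt e0 + wt e1 + wt e2 \<le> 2 * (card ?J - code_dim C)"
    by (elim exE conjE) (rule that; assumption)
  define D where "D = n - k"
  define cnt where "cnt j = of_bool (e0 j \<noteq> 0) + of_bool (e1 j \<noteq> 0) + (of_bool (e2 j \<noteq> 0) :: nat)" for j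
  define T2 where "T2 = ?J \<inter> {j. 2 \<le> cnt j}"
  define T1 where "T1 = ?J \<inter> {j. cnt j = 1}"
  define t2 where "t2 = card T2"
  define t1 where "t1 = card T1"
  have fJ: "finite ?J" by simp
  have t2s: "(\<Sum>j\<in>?J. of_bool (2 \<le> cnt j)) = t2" unfolding t2_def T2_def
    by (simp add: sum_of_bool_eq)
  have t1s: "(\<Sum>j\<in>?J. of_bool (cnt j = 1)) = t1" unfolding t1_def T1_def
    by (simp add: sum_of_bool_eq)
  have hS: "(\<Sum>j\<in>?J. cnt j) \<le> 2 * D"
  proof -
    have "(\<Sum>j\<in>?J. cnt j) = wt e0 + wt e1 + wt e2"
      unfolding cnt_def wt_sum[OF e(1) fJ] wt_sum[OF e(2) fJ] wt_sum[OF e(3) fJ]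
      by (simp add: sum.distrib)
    then show ?thesis using e(10) dk by (simp add: D_def)
  qed
  have pw: "wt (x - y) = (\<Sum>j\<in>?J. of_bool (x j \<noteq> y j))" if "x \<in> vecs ?J" "y \<in> vecs ?J" for x y :: "nat \<Rightarrow> 'a"
    using wt_sum[OF vecs_diff[OF that] fJ] by simp
  have pd: "D + 1 \<le> wt (x - y)" if "x - y \<in> C" "x \<noteq> y" for x y :: "nat \<Rightarrow> 'a"
    using mw that by (simp add: D_def)
  have A: "3 * D + 3 \<le> 3 * t2 + 2 * t1"
  proof -
    have "(\<Sum>j\<in>?J. of_bool (e0 j \<noteq> e1 j) + of_bool (e0 j \<noteq> e2 j) + of_bool (e1 j \<noteq> e2 j))
       \<le> (\<Sum>j\<in>?J. 3 * of_bool (2 \<le> cnt j) + 2 * (of_bool (cnt j = 1) :: nat))"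
      by (rule sum_mono) (simp only: cnt_def percoord(1))
    then have "wt (e0 - e1) + wt (e0 - e2) + wt (e1 - e2) \<le> 3 * t2 + 2 * t1"
      using pw[OF e(1,2)] pw[OF e(1,3)] pw[OF e(2,3)] t1s t2s
      by (simp add: sum.distrib sum_distrib_left[symmetric])
    moreover have "D + 1 \<le> wt (e0 - e1)" "D + 1 \<le> wt (e0 - e2)" "D + 1 \<le> wt (e1 - e2)"
      using pd e by auto
    ultimately show ?thesis by linarith
  qed
  have B: "D + 1 \<le> t2 + t1"
  proof -
    have "(\<Sum>j\<in>?J. of_bool (e0 j \<noteq> e1 j))
       \<le> (\<Sum>j\<in>?J. of_bool (2 \<le> cnt j) + (of_bool (cnt j = 1) :: nat))"
      by (rule sum_mono) (simp only: cnt_def percoord(2))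
    then have "wt (e0 - e1) \<le> t2 + t1"
      using pw[OF e(1,2)] t1s t2s by (simp add: sum.distrib)
    moreover have "D + 1 \<le> wt (e0 - e1)" using pd e by auto
    ultimately show ?thesis by linarith
  qed
  have Cc: "2 * t2 + t1 \<le> 2 * D"
  proof -
    have "(\<Sum>j\<in>?J. 2 * of_bool (2 \<le> cnt j) + (of_bool (cnt j = 1) :: nat)) \<le> (\<Sum>j\<in>?J. cnt j)"
      by (rule sum_mono) (simp only: cnt_def percoord(3))
    then show ?thesis using hS t1s t2s by (simp add: sum.distrib sum_distrib_left[symmetric])
  qed
  have disj: "T1 \<inter> T2 = {}" unfolding T1_def T2_def by auto
  have E: "t1 + t2 \<le> n"
  proof -
    have "card (T1 \<union> T2) \<le> card ?J" by (rule card_mono) (auto simp: T1_def T2_def)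
    moreover have "card (T1 \<union> T2) = t1 + t2" unfolding t1_def t2_def
      by (rule card_Un_disjoint) (auto simp: T1_def T2_def disj)
    ultimately show ?thesis by simp
  qed
  have D3: "t2 + 3 \<le> D" using A Cc by linarith
  have Dk: "D + k = n" using D3 unfolding D_def by simp
  have k3: "3 \<le> k" using A E D3 Dk by linarith
  have Dn: "D + k = n" "3 \<le> k" "t2 + 3 \<le> D" using Dk k3 D3 by auto
  define z where "z = n - 2 * k - t2"
  have zz: "n \<le> z + 2 * k + t2" "z = 0 \<or> z + 2 * k + t2 = n" unfolding z_def by auto
  have zt1: "z \<le> t1" using zz B Dn by linarith
  obtain Y where Y: "Y \<subseteq> T1" "card Y = z" "finite Y"
    using obtain_subset_with_card_n[of z T1] zt1 t1_def by metis
  define X where "X = T2 \<union> Y"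
  define w where "w = t2 + z"
  have fT2: "finite T2" unfolding T2_def by simp
  have XJ: "X \<subseteq> ?J" using Y(1) unfolding X_def T1_def T2_def by auto
  have fX: "finite X" using XJ finite_subset by blast
  have cX: "card X = w" unfolding X_def w_def t2_def
    using card_Un_disjoint[OF fT2 Y(3)] Y disj by auto
  have wr1: "max 0 (int n - 2 * int k) \<le> int w" unfolding w_def using zz(1) by (simp add: max_def)
  have wn: "w + k + 3 \<le> n" unfolding w_def using zz(2) Dn by linarith
  have wr2: "int w \<le> int n - int k - 3" using wn by linarith
  have L: "lightly_two_MDS (?J - X) (pm ?J X ` C)" using R wr1 wr2 XJ cX by blast
  let ?p = "pm ?J X"
  define f0 where "f0 = ?p e0"
  define f1 where "f1 = ?p e1"
  define f2 where "f2 = ?p e2"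
  have fv: "f0 \<in> vecs (?J - X)" "f1 \<in> vecs (?J - X)" "f2 \<in> vecs (?J - X)"
    unfolding f0_def f1_def f2_def by (rule pm_vecs)+
  have fJX: "finite (?J - X)" by simp
  have wf: "wt (?p x) = (\<Sum>j\<in>?J - X. of_bool (x j \<noteq> 0))" for x :: "nat \<Rightarrow> 'a"
    using wt_sum[OF pm_vecs fJX] by (simp add: pm_def)
  have sumf: "wt f0 + wt f1 + wt f2 = (\<Sum>j\<in>?J - X. cnt j)"
    unfolding f0_def f1_def f2_def wf cnt_def by (simp add: sum.distrib)
  have "(\<Sum>j\<in>?J - X. cnt j) = (\<Sum>j\<in>?J - X. of_bool (j \<in> T1 - Y))"
  proof (rule sum.cong[OF refl])
    fix j assume j: "j \<in> ?J - X"
    then have "j \<notin> T2" "j \<notin> Y" "j \<in> ?J" unfolding X_def by auto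
    then show "cnt j = of_bool (j \<in> T1 - Y)" unfolding T2_def T1_def by auto
  qed
  also have "\<dots> = card ((?J - X) \<inter> {j. j \<in> T1 - Y})" by (simp add: sum_of_bool_eq)
  also have "(?J - X) \<inter> {j. j \<in> T1 - Y} = T1 - Y" unfolding X_def T1_def T2_def by auto
  also have "card (T1 - Y) = t1 - z" using Y t1_def card_Diff_subset by metis
  finally have ws: "wt f0 + wt f1 + wt f2 = t1 - z" using sumf by simp
  have cJX: "card (?J - X) = n - w" using XJ cX fX by (simp add: card_Diff_subset)
  have big: "\<forall>c\<in>C. c \<noteq> 0 \<longrightarrow> card X < wt c" using mw cX Dn A B Cc E
    unfolding w_def z_def D_def by fastforce
  have cdim: "code_dim (?p ` C) = k" using dim_pm[OF lc fX big] dk by simp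
  have fp: "D + 1 \<le> wt fa + wt fb + w" if "ea - eb \<in> C" "ea \<noteq> eb" "ea \<in> vecs ?J" "eb \<in> vecs ?J"
     "fa = ?p ea" "fb = ?p eb" for ea eb fa fb
  proof -
    have "D + 1 \<le> wt (ea - eb)" using pd that by auto
    also have "\<dots> \<le> wt (?p (ea - eb)) + card X"
      using wt_pm[OF vecs_diff[OF that(3,4)] fX fJ] .
    also have "?p (ea - eb) = fa - fb" using that by (simp add: pm_diff)
    also have "wt (fa - fb) \<le> wt fa + wt fb" using wt_diff_le[OF _ _ fJX] pm_vecs that by metis
    finally show ?thesis using cX by simp
  qed
  have p01: "D + 1 \<le> wt f0 + wt f1 + w" using fp[OF e(7) e(4) e(1) e(2)] f0_def f1_def by simp
  have p02: "D + 1 \<le> wt f0 + wt f2 + w" using fp[OF e(8) e(5) e(1) e(3)] f0_def f2_def by simp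
  have p12: "D + 1 \<le> wt f1 + wt f2 + w" using fp[OF e(9) e(6) e(2) e(3)] f1_def f2_def by simp
  have wsb: "wt f0 + wt f1 + wt f2 + 2 * w + 2 * k \<le> 2 * n"
  proof -
    have ws': "wt f0 + wt f1 + wt f2 + z = t1" using ws zt1 by simp
    show ?thesis using zz(2)
    proof
      assume "z = 0" then show ?thesis using ws' Cc Dn w_def by linarith
    next
      assume "z + 2 * k + t2 = n" then show ?thesis using ws' E Dn w_def by linarith
    qed
  qed
  have sb: "wt f0 + wt f1 + wt f2 \<le> 2 * (card (?J - X) - code_dim (?p ` C))"
  proof -
    have "card (?J - X) - code_dim (?p ` C) = n - w - k" using cJX cdim by simp
    moreover have "n - w - k + w + k = n" using wn by simp
    ultimately show ?thesis using wsb by presburger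
  qed
  have si0: "wt f0 + 1 + w \<le> D" "wt f1 + 1 + w \<le> D" "wt f2 + 1 + w \<le> D"
     "1 \<le> wt f0" "1 \<le> wt f1" "1 \<le> wt f2"
    using wsb p01 p02 p12 Dn by linarith+
  have si: "wt f + 1 + w \<le> D" "1 \<le> wt f"
    if "f = f0 \<or> f = f1 \<or> f = f2" for f
    using that si0 by auto
  have nz: "f \<noteq> 0" if "f = f0 \<or> f = f1 \<or> f = f2" for f
    using si(2)[OF that] by auto
  have md: "wt f + 1 \<le> min_dist (?J - X) (?p ` C)" if "f = f0 \<or> f = f1 \<or> f = f2" for f
  proof (rule md_pm[OF lc fX mw])
    show "wt f + 1 \<le> n - k + 1 - card X" using si(1)[OF that] cX Dn unfolding D_def by linarith
    show "wt f \<le> card (?J - X)" using that fv wt_le fJX by blast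
  qed
  have dif: "?p ea - ?p eb \<in> ?p ` C" if "ea - eb \<in> C" for ea eb
    using that by (metis image_eqI pm_diff)
  have sup: "supp (?p ea) \<inter> supp (?p eb) = {}"
    if "\<And>j. j \<in> ?J \<Longrightarrow> ea j \<noteq> 0 \<Longrightarrow> eb j \<noteq> 0 \<Longrightarrow> 2 \<le> cnt j" for ea eb
  proof -
    { fix j assume j: "j \<in> supp (?p ea)" "j \<in> supp (?p eb)"
      then have "j \<in> ?J - X" "ea j \<noteq> 0" "eb j \<noteq> 0" by (auto simp: supp_def pm_def split: if_splits)
      then have "j \<in> T2" using that unfolding T2_def by auto
      then have False using \<open>j \<in> ?J - X\<close> unfolding X_def by auto }
    then show ?thesis by blast
  qed
  have s01: "supp f0 \<inter> supp f1 = {}" unfolding f0_def f1_def by (rule sup) (simp add: cnt_def)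
  have s02: "supp f0 \<inter> supp f2 = {}" unfolding f0_def f2_def by (rule sup) (simp add: cnt_def)
  have s12: "supp f1 \<inter> supp f2 = {}" unfolding f1_def f2_def by (rule sup) (simp add: cnt_def)
  have "\<exists>e0 e1 e2. e0 \<in> vecs (?J - X) \<and> e1 \<in> vecs (?J - X) \<and> e2 \<in> vecs (?J - X) \<and>
       e0 \<noteq> 0 \<and> e1 \<noteq> 0 \<and> e2 \<noteq> 0 \<and>
       wt e0 + 1 \<le> min_dist (?J - X) (?p ` C) \<and> wt e1 + 1 \<le> min_dist (?J - X) (?p ` C) \<and> wt e2 + 1 \<le> min_dist (?J - X) (?p ` C) \<and>
       e0 - e1 \<in> ?p ` C \<and> e0 - e2 \<in> ?p ` C \<and> e1 - e2 \<in> ?p ` C \<and>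
       supp e0 \<inter> supp e1 = {} \<and> supp e0 \<inter> supp e2 = {} \<and> supp e1 \<inter> supp e2 = {} \<and>
       wt e0 + wt e1 + wt e2 \<le> 2 * (card (?J - X) - code_dim (?p ` C))"
    apply (rule exI[of _ f0], rule exI[of _ f1], rule exI[of _ f2])
    using fv nz md s01 s02 s12 sb dif[OF e(7)] dif[OF e(8)] dif[OF e(9)]
    unfolding f0_def f1_def f2_def by simp
  then show False using L unfolding lightly_two_MDS_def by blast
qed


theorem mainTheorem15:
  fixes C :: "(nat \<Rightarrow> 'a::{field,finite}) set" and n k :: nat
  assumes "lin_code {0..<n} C" and "code_dim C = k" and "is_MDS {0..<n} C"
  shows "two_MDS {0..<n} C \<longleftrightarrow>
    (\<forall>w::nat. \<forall>X. max 0 (int n - 2 * int k) \<le> int w \<longrightarrow> int w \<le> int n - int k - 3 \<longrightarrow>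
        X \<subseteq> {0..<n} \<longrightarrow> card X = w \<longrightarrow>
        lightly_two_MDS ({0..<n} - X) (puncture {0..<n} X C))"
proof -
  have mw: "\<forall>c\<in>C. c \<noteq> 0 \<longrightarrow> n - k + 1 \<le> wt c"
    using mds_wt[OF assms(3) assms(2)] by blast
  show ?thesis
  proof
    assume two: "two_MDS {0..<n} C"
    show "\<forall>w::nat. \<forall>X. max 0 (int n - 2 * int k) \<le> int w \<longrightarrow> int w \<le> int n - int k - 3 \<longrightarrow>
        X \<subseteq> {0..<n} \<longrightarrow> card X = w \<longrightarrow>
        lightly_two_MDS ({0..<n} - X) (puncture {0..<n} X C)"
    proof (intro allI impI)
      fix w :: nat and X
      assume "max 0 (int n - 2 * int k) \<le> int w" and h: "int w \<le> int n - int k - 3"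
        and XJ: "X \<subseteq> {0..<n}" and cX: "card X = w"
      have wk: "w + k \<le> n" using h by linarith
      show "lightly_two_MDS ({0..<n} - X) (puncture {0..<n} X C)"
        using dir1[OF assms(1) assms(2) mw two wk XJ cX] by (simp add: puncture_pm)
    qed
  next
    assume "\<forall>w::nat. \<forall>X. max 0 (int n - 2 * int k) \<le> int w \<longrightarrow> int w \<le> int n - int k - 3 \<longrightarrow>
        X \<subseteq> {0..<n} \<longrightarrow> card X = w \<longrightarrow>
        lightly_two_MDS ({0..<n} - X) (puncture {0..<n} X C)"
    then show "two_MDS {0..<n} C"
      using dir2[OF assms(1) assms(2) mw] by (simp add: puncture_pm)
  qed
qed

end
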